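(* In the screening cohort model described in the context, for a screening policy $h\in\{S,NS\}^J$, the expected total number of life years left $T_h$ of the cohort, measured at the beginning, is $$ \mathbb{E} T_h = \sum_{j=2}^J 2N_j + \sum_{j=1}^J \left[\lambda_{j,-1}(1)\,\mu_{j,h}(-1) + \sum_{k=0}^K \mu_{j,h}(k)\,\mathbb{E} T_{j,k}\right]N_j, $$ where $\mathbb{E} T_{j,k} = \sum_{t=0}^\infty t\,\lambda_{j,k}(t)$.
   Context: Model of a cohort of women undergoing (biennial) breast cancer screening. Age groups (screening rounds, two years apart) are indexed by $j=1,\dots,J$. A policy is $h=[h(1),\dots,h(J)]\in\{S,NS\}^J$, where $h(j)=S$ means age group $j$ is screened and $NS$ means not screened. At round $j$, an individual's observed state is a random variable $X_{j,h}\in\{-1,0,1,\dots,K\}$, where $-1$ means no breast cancer diagnosed and $k=0,\dots,K$ are diagnosed cancer stages; its distribution $\mu_{j,h}(k)=P(X_{j,h}=k)$ depends only on $j$ and $h(j)$ (not on the individual). For an individual of age group $j$ in state $k$, the time to death (in years, a nonnegative integer) is $T_{j,k}$ with distribution $\lambda_{j,k}(t)=P(T_{j,k}=t)$, independent of the individual. $T_j$ denotes the time to death of an individual at age group $j$ regardless of state, with $P(T_j=t)=\sum_{k=-1}^K \lambda_{j,k}(t)\mu_{j,h}(k)$. Individuals leave the screening population when they die or are diagnosed with breast cancer. The cohort starts with $N_1=N_0$ individuals, and the number invited at round $j+1$ is $N_{j+1}=N_j\big(1-P(T_j\in\{0,1\})-P(T_j\ge 2, X_{j,h}\ne -1)\big)$.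 Life-year accounting: each individual present at round $j\ge 2$ contributes the two years lived between rounds $j-1$ and $j$; at round $j$, an undiagnosed individual (state $-1$) who lives only one more year contributes one year; an individual diagnosed at round $j$ in stage $k\ge 0$ contributes $T_{j,k}$ further years. $T_h$ denotes the total number of life years of the cohort counted in this way under policy $h$. *)

theory Defs
  imports "HOL-Probability.Probability"
begin

datatype scr = S | NS

type_synonym policy = "nat \<Rightarrow> scr"

text \<open>State distribution mu j a: distribution of X_{j,h} when h(j) = a (states are integers -1..K).
  Time-to-death distribution lam j k: distribution of T_{j,k}.\<close>
definition joint_pmf ::
  "(nat \<Rightarrow> scr \<Rightarrow> int pmf) \<Rightarrow> (nat \<Rightarrow> int \<Rightarrow> nat pmf) \<Rightarrow> policy \<Rightarrow> nat \<Rightarrow> (int \<times> nat) pmf" where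
  "joint_pmf mu lam h j =
     bind_pmf (mu j (h j)) (\<lambda>k. map_pmf (\<lambda>t. (k, t)) (lam j k))"

text \<open>Number of individuals invited at round j (j \<ge> 1); index 0 is unused.\<close>
fun cohort ::
  "real \<Rightarrow> (nat \<Rightarrow> scr \<Rightarrow> int pmf) \<Rightarrow> (nat \<Rightarrow> int \<Rightarrow> nat pmf) \<Rightarrow> policy \<Rightarrow> nat \<Rightarrow> real" where
  "cohort N0 mu lam h 0 = N0"
| "cohort N0 mu lam h (Suc 0) = N0"
| "cohort N0 mu lam h (Suc (Suc j)) =
     cohort N0 mu lam h (Suc j) *
       (1 - measure_pmf.prob (joint_pmf mu lam h (Suc j)) {(k, t). t \<in> {0, 1}}
          - measure_pmf.prob (joint_pmf mu lam h (Suc j)) {(k, t). t \<ge> 2 \<and> k \<noteq> -1})"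

text \<open>Life years contributed (from round j on, until the next round) by one individual present
  at round j, whose state is k and time to death is t.\<close>
definition contrib :: "nat \<Rightarrow> int \<times> nat \<Rightarrow> real" where
  "contrib j kt =
     (if j \<ge> 2 then 2 else 0)
     + (if fst kt = -1 \<and> snd kt = 1 then 1 else 0)
     + (if fst kt \<ge> 0 then real (snd kt) else 0)"

text \<open>Expected total life years E T_h of the cohort: each of the N_j individuals at round j
  contributes contrib j (X_{j,h}, T_j) (linearity of expectation over individuals).\<close>
definition expected_life_years ::
  "nat \<Rightarrow> real \<Rightarrow> (nat \<Rightarrow> scr \<Rightarrow> int pmf) \<Rightarrow> (nat \<Rightarrow> int \<Rightarrow> nat pmf) \<Rightarrow> policy \<Rightarrow> real" where
  "expected_life_years J N0 mu lam h =
     (\<Sum>j = 1..J. cohort N0 mu lam h j *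
        measure_pmf.expectation (joint_pmf mu lam h j) (contrib j))"

end

theory Submission
  imports Defs
begin

lemma nn_real_t:
  assumes "summable (\<lambda>t. real t * pmf p t)"
  shows "(\<integral>\<^sup>+t. ennreal (real t) \<partial>measure_pmf p) = ennreal (\<Sum>t. real t * pmf p t)"
proof -
  have "(\<integral>\<^sup>+t. ennreal (real t) \<partial>measure_pmf p) = (\<integral>\<^sup>+t. ennreal (pmf p t) * ennreal (real t) \<partial>count_space UNIV)"
    by (rule nn_integral_measure_pmf)
  also have "\<dots> = (\<Sum>t. ennreal (real t * pmf p t))"
    by (simp add: nn_integral_count_space_nat ennreal_mult' mult.commute)
  also have "\<dots> = ennreal (\<Sum>t. real t * pmf p t)"
    using assms by (intro suminf_ennreal2) auto
  finally show ?thesis .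
qed

lemma inner_eq:
  assumes "k \<ge> 0 \<Longrightarrow> summable (\<lambda>t. real t * pmf p t)"
  shows "(\<integral>\<^sup>+t. ennreal (contrib j (k,t)) \<partial>measure_pmf p) =
    ennreal ((if j\<ge>2 then 2 else 0) + (if k=-1 then pmf p 1 else 0)
      + (if k\<ge>0 then (\<Sum>t. real t * pmf p t) else 0))"
proof -
  define c :: real where "c = (if j\<ge>2 then 2 else 0)"
  have c0: "c \<ge> 0" by (simp add: c_def)
  have eq: "ennreal (contrib j (k,t)) = ennreal c + (if k=-1 then indicator {1} t else 0)
      + (if k\<ge>0 then ennreal (real t) else 0)" for t
    by (auto simp: contrib_def c_def ennreal_plus[symmetric] indicator_def simp del: ennreal_plus)
  have "(\<integral>\<^sup>+t. ennreal (contrib j (k,t)) \<partial>measure_pmf p) =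
     (\<integral>\<^sup>+t. ennreal c + (if k=-1 then indicator {1} t else 0) \<partial>measure_pmf p)
     + (\<integral>\<^sup>+t. (if k\<ge>0 then ennreal (real t) else 0) \<partial>measure_pmf p)"
    unfolding eq by (rule nn_integral_add) auto
  also have "(\<integral>\<^sup>+t. ennreal c + (if k=-1 then indicator {1} t else 0) \<partial>measure_pmf p)
      = ennreal c + (\<integral>\<^sup>+t. (if k=-1 then indicator {1} t else 0) \<partial>measure_pmf p)"
    by (subst nn_integral_add) (auto simp: measure_pmf.emeasure_space_1)
  also have "(\<integral>\<^sup>+t. (if k=-1 then indicator {1} t else 0) \<partial>measure_pmf p)
      = ennreal (if k=-1 then pmf p 1 else 0)"
    by (cases "k=-1") (auto simp: emeasure_pmf_single)
  also have "(\<integral>\<^sup>+t. (if k\<ge>0 then ennreal (real t) else 0) \<partial>measure_pmf p)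
      = ennreal (if k\<ge>0 then (\<Sum>t. real t * pmf p t) else 0)"
    using assms by (cases "k\<ge>0") (auto simp: nn_real_t)
  finally show ?thesis
    unfolding c_def[symmetric]
    by (simp add: ennreal_plus[symmetric] c0 suminf_nonneg assms del: ennreal_plus)
qed


lemma expect_j:
  fixes K :: nat and mu :: "nat \<Rightarrow> scr \<Rightarrow> int pmf" and lam :: "nat \<Rightarrow> int \<Rightarrow> nat pmf"
  assumes states: "\<And>j a. set_pmf (mu j a) \<subseteq> {-1 .. int K}"
    and finite_mean: "\<And>j k. 0 \<le> k \<Longrightarrow> k \<le> int K \<Longrightarrow>
                          summable (\<lambda>t. real t * pmf (lam j k) t)"
  shows "measure_pmf.expectation (joint_pmf mu lam h j) (contrib j) =
     (if j\<ge>2 then 2 else 0) + (pmf (lam j (-1)) 1 * pmf (mu j (h j)) (-1)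
                 + (\<Sum>k\<in>{0 .. int K}. pmf (mu j (h j)) k * (\<Sum>t. real t * pmf (lam j k) t)))"
proof -
  define M where "M = mu j (h j)"
  define c :: real where "c = (if j\<ge>2 then 2 else 0)"
  define E where "E k = (\<Sum>t. real t * pmf (lam j k) t)" for k
  define g where "g k = c + (if k=-1 then pmf (lam j k) 1 else 0)
      + (if k\<ge>0 then E k else 0)" for k
  have sM: "set_pmf M \<subseteq> {-1 .. int K}" using states by (simp add: M_def)
  have fin: "finite (set_pmf M)" using sM finite_subset by blast
  have E0: "E k \<ge> 0" if "0 \<le> k" "k \<le> int K" for k
    unfolding E_def using finite_mean[OF that] by (intro suminf_nonneg) auto
  have g0: "g k \<ge> 0" if "k \<in> {-1 .. int K}" for k
    using that E0[of k] by (auto simp: g_def c_def)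
  have c0: "contrib j x \<ge> 0" for x by (auto simp: contrib_def)
  have "measure_pmf.expectation (joint_pmf mu lam h j) (contrib j) =
      enn2real (\<integral>\<^sup>+x. ennreal (contrib j x) \<partial>measure_pmf (joint_pmf mu lam h j))"
    by (rule integral_eq_nn_integral) (auto simp: c0)
  also have "(\<integral>\<^sup>+x. ennreal (contrib j x) \<partial>measure_pmf (joint_pmf mu lam h j))
     = (\<integral>\<^sup>+k. \<integral>\<^sup>+t. ennreal (contrib j (k,t)) \<partial>measure_pmf (lam j k) \<partial>measure_pmf M)"
    by (simp add: joint_pmf_def M_def)
  also have "\<dots> = (\<integral>\<^sup>+k. ennreal (g k) \<partial>measure_pmf M)"
  proof (rule nn_integral_cong_AE, rule AE_pmfI)
    fix k assume k: "k \<in> set_pmf M"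
    then have "k \<in> {-1 .. int K}" using sM by blast
    then show "(\<integral>\<^sup>+t. ennreal (contrib j (k,t)) \<partial>measure_pmf (lam j k)) = ennreal (g k)"
      unfolding g_def c_def E_def
      by (intro inner_eq finite_mean) auto
  qed
  also have "\<dots> = (\<Sum>k\<in>set_pmf M. ennreal (g k) * pmf M k)"
    by (rule nn_integral_measure_pmf_finite[OF fin]) auto
  also have "\<dots> = ennreal (\<Sum>k\<in>set_pmf M. g k * pmf M k)"
    proof -
    have "(\<Sum>k\<in>set_pmf M. ennreal (g k) * pmf M k) = (\<Sum>k\<in>set_pmf M. ennreal (g k * pmf M k))"
      by (intro sum.cong) (auto simp: ennreal_mult'')
    also have "\<dots> = ennreal (\<Sum>k\<in>set_pmf M. g k * pmf M k)"
      using sM g0 by (intro sum_ennreal) (auto simp: subset_iff)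
    finally show ?thesis .
  qed
  also have "(\<Sum>k\<in>set_pmf M. g k * pmf M k) = (\<Sum>k\<in>{-1 .. int K}. g k * pmf M k)"
    using sM by (intro sum.mono_neutral_left) (auto simp: set_pmf_eq)
  finally have X: "measure_pmf.expectation (joint_pmf mu lam h j) (contrib j) = enn2real (ennreal (\<Sum>k\<in>{-1 .. int K}. g k * pmf M k))" .
  have 1: "measure_pmf.expectation (joint_pmf mu lam h j) (contrib j) = (\<Sum>k\<in>{-1 .. int K}. g k * pmf M k)"
  proof -
    have "0 \<le> (\<Sum>k\<in>{-1 .. int K}. g k * pmf M k)"
      using g0 by (intro sum_nonneg) auto
    then show ?thesis using X by simp
  qed
  have split: "{-1 .. int K} = insert (-1) {0 .. int K}" by auto
  have one: "(\<Sum>k\<in>{-1 .. int K}. pmf M k) = 1"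
    using sM by (intro sum_pmf_eq_1) auto
  have "(\<Sum>k\<in>{-1 .. int K}. g k * pmf M k) = (\<Sum>k\<in>{-1 .. int K}. c * pmf M k)
      + (g (-1) - c) * pmf M (-1) + (\<Sum>k\<in>{0 .. int K}. (g k - c) * pmf M k)"
    unfolding split by (simp add: sum.distrib algebra_simps sum_subtractf)
  also have "(\<Sum>k\<in>{0 .. int K}. (g k - c) * pmf M k) = (\<Sum>k\<in>{0 .. int K}. pmf M k * E k)"
    by (intro sum.cong) (auto simp: g_def)
  finally show ?thesis using one
    by (simp add: 1 sum_distrib_left[symmetric] g_def c_def M_def E_def mult.commute)
qed


theorem proposition1:
  fixes J K :: nat and N0 :: real and h :: policy
    and mu :: "nat \<Rightarrow> scr \<Rightarrow> int pmf" and lam :: "nat \<Rightarrow> int \<Rightarrow> nat pmf"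
  assumes states: "\<And>j a. set_pmf (mu j a) \<subseteq> {-1 .. int K}"
    and finite_mean: "\<And>j k. 0 \<le> k \<Longrightarrow> k \<le> int K \<Longrightarrow>
                          summable (\<lambda>t. real t * pmf (lam j k) t)"
  shows "expected_life_years J N0 mu lam h =
           (\<Sum>j = 2..J. 2 * cohort N0 mu lam h j)
           + (\<Sum>j = 1..J. (pmf (lam j (-1)) 1 * pmf (mu j (h j)) (-1)
                 + (\<Sum>k\<in>{0 .. int K}. pmf (mu j (h j)) k * (\<Sum>t. real t * pmf (lam j k) t)))
                 * cohort N0 mu lam h j)"
proof -
  define N where "N j = cohort N0 mu lam h j" for j
  define A where "A j = (pmf (lam j (-1)) 1 * pmf (mu j (h j)) (-1)
                 + (\<Sum>k\<in>{0 .. int K}. pmf (mu j (h j)) k * (\<Sum>t. real t * pmf (lam j k) t)))" for j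
  have "expected_life_years J N0 mu lam h = (\<Sum>j = 1..J. N j * ((if j\<ge>2 then 2 else 0) + A j))"
    unfolding expected_life_years_def N_def A_def
    by (intro sum.cong refl) (simp add: expect_j[OF states finite_mean])
  also have "\<dots> = (\<Sum>j = 1..J. (if j\<ge>2 then 2 * N j else 0)) + (\<Sum>j = 1..J. A j * N j)"
    by (subst sum.distrib[symmetric], intro sum.cong refl) (simp add: algebra_simps)
  also have "(\<Sum>j = 1..J. (if j\<ge>2 then 2 * N j else 0)) = (\<Sum>j = 2..J. 2 * N j)"
  proof -
    have "(\<Sum>j = 1..J. (if j\<ge>2 then 2 * N j else 0)) = (\<Sum>j \<in> {1..J} \<inter> {j. j\<ge>2}. 2 * N j)"
      by (simp add: sum.inter_restrict)
    also have "{1..J} \<inter> {j. j\<ge>2} = {2..J}" by auto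
    finally show ?thesis .
  qed
  finally show ?thesis unfolding N_def A_def .
qed

end
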